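(* Let $\sigma,\nu\in\mathbb R$ and $V:\mathbb R\to\mathbb R$ smooth. Let $M,K$ be the $6\times6$ matrices $$M=\begin{pmatrix}0&\frac\sigma2&-\frac12&0&0&0\\-\frac\sigma2&0&0&0&0&0\\\frac12&0&0&0&0&0\\0&0&0&0&0&0\\0&0&0&0&0&0\\0&0&0&0&0&0\end{pmatrix},\quad K=\begin{pmatrix}0&0&0&0&\frac\sigma2&\nu\\0&0&0&0&0&0\\0&0&0&-1&0&0\\0&0&1&0&0&0\\-\frac\sigma2&0&0&0&0&0\\-\nu&0&0&0&0&0\end{pmatrix},$$ and $S(\mathbf z)=uw-V(u)-\frac\nu2v^2-\frac\sigma2\theta\rho$ for $\mathbf z=(u,\theta,\phi,w,\rho,v)^T$. Let $\mathbf z_h=(u_h,\theta_h,\phi_h,w_h,\rho_h,v_h)^T$ be continuously differentiable in $t$ with values in $(V_h)^6$ and satisfy the DG scheme with central fluxes: for every $j$ and every $\boldsymbol\varphi\in(V_h)^6$, $$\int_{I_j}M\partial_t\mathbf z_h\cdot\boldsymbol\varphi\,dx-\int_{I_j}K\mathbf z_h\cdot\partial_x\boldsymbol\varphi\,dx+\big(K\{\mathbf z_h\}\cdot\boldsymbol\varphi^-\big)_{j+\frac12}-\big(K\{\mathbf z_h\}\cdot\boldsymbol\varphi^+\big)_{j-\frac12}=\int_{I_j}\nabla_{\mathbf z}S(\mathbf z_h)\cdot\boldsymbol\varphi\,dx.$$ Then the discrete energy $\mathcal E_h=\int_\Omega\big(-V(u_h)+\frac\nu2v_h^2\big)dx$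 is constant in time.
   Context: This is a DG discretization of the BBM–KdV equation $u_t-\sigma u_{xxt}=V'(u)_x+\nu u_{xxx}$ in the multi-symplectic form $M\mathbf z_t+K\mathbf z_x=\nabla_{\mathbf z}S(\mathbf z)$ above. Mesh and spaces: a one-dimensional domain $\Omega$ is partitioned into cells $I_j=[x_{j-1/2},x_{j+1/2}]$, $j=1,\dots,N$, with periodic boundary conditions (interface indices modulo $N$). For fixed $k\ge0$, $V_h=\{v\in L^2(\Omega): v|_{I_j}\text{ is a polynomial of degree}\le k\ \forall j\}$. For vector functions in $(V_h)^6$, superscripts $\pm$ at $x_{j+1/2}$ denote right/left limits and $\{\mathbf v\}=\frac12(\mathbf v^++\mathbf v^-)$; subscript $j\pm\frac12$ denotes evaluation at $x_{j\pm1/2}$. *)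

theory Defs
  imports "HOL-Analysis.Analysis" "HOL-Computational_Algebra.Polynomial"
begin

text \<open>Components of z = (u, theta, phi, w, rho, v) are indexed 0..5.
Cells are I_j = [xs j, xs (Suc j)] for j < N; Omega = [xs 0, xs N], periodic.
An element of (V_h)^6 is P :: nat => nat => real poly, P a j = component a on cell j.\<close>

definition smooth_fun :: "(real \<Rightarrow> real) \<Rightarrow> bool" where
  "smooth_fun V \<longleftrightarrow> (\<forall>n x. ((deriv ^^ n) V) differentiable (at x))"

definition Mmat :: "real \<Rightarrow> nat \<Rightarrow> nat \<Rightarrow> real" where
  "Mmat \<sigma> a b =
     (if a = 0 \<and> b = 1 then \<sigma>/2
      else if a = 0 \<and> b = 2 then -1/2
      else if a = 1 \<and> b = 0 then -\<sigma>/2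
      else if a = 2 \<and> b = 0 then 1/2
      else 0)"

definition Kmat :: "real \<Rightarrow> real \<Rightarrow> nat \<Rightarrow> nat \<Rightarrow> real" where
  "Kmat \<sigma> \<nu> a b =
     (if a = 0 \<and> b = 4 then \<sigma>/2
      else if a = 0 \<and> b = 5 then \<nu>
      else if a = 2 \<and> b = 3 then -1
      else if a = 3 \<and> b = 2 then 1
      else if a = 4 \<and> b = 0 then -\<sigma>/2
      else if a = 5 \<and> b = 0 then -\<nu>
      else 0)"

definition matdot :: "(nat \<Rightarrow> nat \<Rightarrow> real) \<Rightarrow> (nat \<Rightarrow> real) \<Rightarrow> (nat \<Rightarrow> real) \<Rightarrow> real" where
  "matdot A v w = (\<Sum>a<6. (\<Sum>b<6. A a b * v b) * w a)"

definition Sfun :: "(real \<Rightarrow> real) \<Rightarrow> real \<Rightarrow> real \<Rightarrow> (nat \<Rightarrow> real) \<Rightarrow> real" where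
  "Sfun V \<sigma> \<nu> z = z 0 * z 3 - V (z 0) - \<nu>/2 * (z 5)^2 - \<sigma>/2 * z 1 * z 4"

definition gradS :: "(real \<Rightarrow> real) \<Rightarrow> real \<Rightarrow> real \<Rightarrow> (nat \<Rightarrow> real) \<Rightarrow> nat \<Rightarrow> real" where
  "gradS V \<sigma> \<nu> z a = deriv (\<lambda>s. Sfun V \<sigma> \<nu> (z(a := s))) (z a)"

text \<open>Right limit at interface x_{i-1/2} (= xs i, i < N): value of cell i at its left end.\<close>
definition rlim :: "nat \<Rightarrow> (nat \<Rightarrow> real) \<Rightarrow> (nat \<Rightarrow> nat \<Rightarrow> real poly) \<Rightarrow> nat \<Rightarrow> nat \<Rightarrow> real" where
  "rlim N xs P i a = poly (P a i) (xs i)"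

text \<open>Left limit at the same interface: value of the (periodically) preceding cell at its right end.\<close>
definition llim :: "nat \<Rightarrow> (nat \<Rightarrow> real) \<Rightarrow> (nat \<Rightarrow> nat \<Rightarrow> real poly) \<Rightarrow> nat \<Rightarrow> nat \<Rightarrow> real" where
  "llim N xs P i a = poly (P a ((i + N - 1) mod N)) (xs (Suc ((i + N - 1) mod N)))"

definition avg :: "nat \<Rightarrow> (nat \<Rightarrow> real) \<Rightarrow> (nat \<Rightarrow> nat \<Rightarrow> real poly) \<Rightarrow> nat \<Rightarrow> nat \<Rightarrow> real" where
  "avg N xs P i a = (rlim N xs P i a + llim N xs P i a) / 2"

text \<open>DG equation on cell j with central fluxes, for z_h = Z, d/dt z_h = dZ, test function phi
(phi a = component a of the test function on cell j).\<close>
definition dg_eq :: "real \<Rightarrow> real \<Rightarrow> (real \<Rightarrow> real) \<Rightarrow> nat \<Rightarrow> (nat \<Rightarrow> real)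
    \<Rightarrow> (nat \<Rightarrow> nat \<Rightarrow> real poly) \<Rightarrow> (nat \<Rightarrow> nat \<Rightarrow> real poly) \<Rightarrow> nat \<Rightarrow> (nat \<Rightarrow> real poly) \<Rightarrow> bool" where
  "dg_eq \<sigma> \<nu> V N xs Z dZ j \<phi> \<longleftrightarrow>
     integral {xs j..xs (Suc j)}
        (\<lambda>x. matdot (Mmat \<sigma>) (\<lambda>b. poly (dZ b j) x) (\<lambda>a. poly (\<phi> a) x))
   - integral {xs j..xs (Suc j)}
        (\<lambda>x. matdot (Kmat \<sigma> \<nu>) (\<lambda>b. poly (Z b j) x) (\<lambda>a. poly (pderiv (\<phi> a)) x))
   + matdot (Kmat \<sigma> \<nu>) (avg N xs Z (Suc j mod N)) (\<lambda>a. poly (\<phi> a) (xs (Suc j)))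
   - matdot (Kmat \<sigma> \<nu>) (avg N xs Z j) (\<lambda>a. poly (\<phi> a) (xs j))
   = integral {xs j..xs (Suc j)}
        (\<lambda>x. \<Sum>a<6. gradS V \<sigma> \<nu> (\<lambda>b. poly (Z b j) x) a * poly (\<phi> a) x)"

definition energy :: "(real \<Rightarrow> real) \<Rightarrow> real \<Rightarrow> nat \<Rightarrow> (nat \<Rightarrow> real) \<Rightarrow> (nat \<Rightarrow> nat \<Rightarrow> real poly) \<Rightarrow> real" where
  "energy V \<nu> N xs Z =
     (\<Sum>j<N. integral {xs j..xs (Suc j)} (\<lambda>x. - V (poly (Z 0 j) x) + \<nu>/2 * (poly (Z 5 j) x)^2))"

end

theory Submission
  imports Defs
begin


lemma sum6: "(\<Sum>a<6. f a) = f 0 + f 1 + f 2 + f 3 + f 4 + f (5::nat)"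
  by (simp add: eval_nat_numeral)

lemma gradS0: assumes "V differentiable (at (z 0))"
  shows "gradS V \<sigma> \<nu> z 0 = z 3 - deriv V (z 0)"
proof -
  have d: "(V has_real_derivative deriv V (z 0)) (at (z 0))"
    using assms DERIV_deriv_iff_real_differentiable by blast
  have "((\<lambda>s. Sfun V \<sigma> \<nu> (z(0 := s))) has_real_derivative z 3 - deriv V (z 0)) (at (z 0))"
    unfolding Sfun_def by (auto intro!: derivative_eq_intros d)
  then show ?thesis unfolding gradS_def by (rule DERIV_imp_deriv)
qed

lemma gradS_lin:
  "gradS V \<sigma> \<nu> z 1 = -\<sigma>/2 * z 4" "gradS V \<sigma> \<nu> z 2 = 0" "gradS V \<sigma> \<nu> z 3 = z 0"
  "gradS V \<sigma> \<nu> z 4 = -\<sigma>/2 * z 1" "gradS V \<sigma> \<nu> z 5 = -\<nu> * z 5"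
proof -
  have "((\<lambda>s. Sfun V \<sigma> \<nu> (z(1 := s))) has_real_derivative -\<sigma>/2 * z 4) (at (z 1))"
    unfolding Sfun_def by (auto intro!: derivative_eq_intros)
  then show "gradS V \<sigma> \<nu> z 1 = -\<sigma>/2 * z 4" unfolding gradS_def by (rule DERIV_imp_deriv)
  have "((\<lambda>s. Sfun V \<sigma> \<nu> (z(2 := s))) has_real_derivative 0) (at (z 2))"
    unfolding Sfun_def by (auto intro!: derivative_eq_intros)
  then show "gradS V \<sigma> \<nu> z 2 = 0" unfolding gradS_def by (rule DERIV_imp_deriv)
  have "((\<lambda>s. Sfun V \<sigma> \<nu> (z(3 := s))) has_real_derivative z 0) (at (z 3))"
    unfolding Sfun_def by (auto intro!: derivative_eq_intros)
  then show "gradS V \<sigma> \<nu> z 3 = z 0" unfolding gradS_def by (rule DERIV_imp_deriv)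
  have "((\<lambda>s. Sfun V \<sigma> \<nu> (z(4 := s))) has_real_derivative -\<sigma>/2 * z 1) (at (z 4))"
    unfolding Sfun_def by (auto intro!: derivative_eq_intros)
  then show "gradS V \<sigma> \<nu> z 4 = -\<sigma>/2 * z 1" unfolding gradS_def by (rule DERIV_imp_deriv)
  have "((\<lambda>s. Sfun V \<sigma> \<nu> (z(5 := s))) has_real_derivative -\<nu> * z 5) (at (z 5))"
    unfolding Sfun_def by (auto intro!: derivative_eq_intros)
  then show "gradS V \<sigma> \<nu> z 5 = -\<nu> * z 5" unfolding gradS_def by (rule DERIV_imp_deriv)
qed

lemma gradS1': "gradS V \<sigma> \<nu> z (Suc 0) = -\<sigma>/2 * z 4"
  using gradS_lin(1) by simp

definition mj :: "(nat\<Rightarrow>real) \<Rightarrow> nat \<Rightarrow> real poly \<Rightarrow> real poly \<Rightarrow> real" where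
  "mj xs j F G = integral {xs j..xs (Suc j)} (\<lambda>x. poly F x * poly G x)"
definition pr :: "nat \<Rightarrow> nat \<Rightarrow> nat" where "pr N i = (i + N - 1) mod N"
definition av :: "nat \<Rightarrow> (nat\<Rightarrow>real) \<Rightarrow> (nat \<Rightarrow> real poly) \<Rightarrow> nat \<Rightarrow> real" where
  "av N xs F i = (poly (F i) (xs i) + poly (F (pr N i)) (xs (Suc (pr N i))))/2"
definition bj :: "nat \<Rightarrow> (nat\<Rightarrow>real) \<Rightarrow> (nat \<Rightarrow> real poly) \<Rightarrow> nat \<Rightarrow> real poly \<Rightarrow> real" where
  "bj N xs F j G = - integral {xs j..xs (Suc j)} (\<lambda>x. poly (F j) x * poly (pderiv G) x)
     + av N xs F (Suc j mod N) * poly G (xs (Suc j)) - av N xs F j * poly G (xs j)"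

lemma avg_av: "avg N xs Z i a = av N xs (Z a) i"
  unfolding avg_def av_def rlim_def llim_def pr_def by simp

lemma pint: fixes p q :: "real poly" shows "(\<lambda>x. poly p x * poly q x) integrable_on {a..b}"
  by (intro integrable_continuous_interval continuous_on_mult continuous_on_poly continuous_on_id)

lemma hk_mult_left: "integral S (\<lambda>x. c * f x) = c * integral S (f::real\<Rightarrow>real)"
  using integral_cmul[of S c f] by simp
lemma hk_mult_right: "integral S (\<lambda>x. f x * c) = integral S (f::real\<Rightarrow>real) * c"
  using integral_cmul[of S c f] by (simp add: mult.commute)
lemma hk_div: "integral S (\<lambda>x. f x / c) = integral S (f::real\<Rightarrow>real) / c"
  using hk_mult_right[of S f "1/c"] by simp
lemma cint: "continuous_on {a..b} f \<Longrightarrow> (f::real\<Rightarrow>real) integrable_on {a..b}"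
  by (rule integrable_continuous_interval)
lemma cpoly: "continuous_on A (\<lambda>x. poly p (x::real))"
  by (intro continuous_on_poly continuous_on_id)

lemmas isimps = integral_add integral_diff hk_mult_left hk_mult_right hk_div cint cpoly
   continuous_on_add continuous_on_diff continuous_on_mult continuous_on_const continuous_on_minus

lemma comp0:
  assumes "dg_eq \<sigma> \<nu> V N xs P Q j (\<lambda>a. if a = 0 then \<psi> else 0)"
    and dV: "\<And>x. V differentiable (at x)" and cV: "continuous_on UNIV (deriv V)"
  shows "\<sigma>/2 * mj xs j (Q 1 j) \<psi> - 1/2 * mj xs j (Q 2 j) \<psi> + \<sigma>/2 * bj N xs (P 4) j \<psi>
     + \<nu> * bj N xs (P 5) j \<psi>
     = mj xs j (P 3 j) \<psi> - integral {xs j..xs (Suc j)} (\<lambda>x. deriv V (poly (P 0 j) x) * poly \<psi> x)"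
proof -
  have ci: "(\<lambda>x. deriv V (poly (P 0 j) x) * poly \<psi> x) integrable_on {xs j..xs (Suc j)}"
    by (intro integrable_continuous_interval continuous_intros continuous_on_compose2[OF cV]) auto
  have cVp: "\<And>p A. continuous_on A (\<lambda>x. deriv V (poly p x))"
    by (intro continuous_on_compose2[OF cV] cpoly) auto
  show ?thesis using assms(1)
    unfolding dg_eq_def matdot_def sum6 Mmat_def Kmat_def
    apply (simp add: gradS0 dV gradS_lin gradS1' avg_av)
    apply (simp add: algebra_simps isimps cVp mj_def bj_def add_divide_distrib diff_divide_distrib
       del: mult_cancel_left mult_cancel_right)
    apply linarith?
    apply (auto simp: distrib_left[symmetric])?
    done
qed


lemma comp1:
  assumes "dg_eq \<sigma> \<nu> V N xs P Q j (\<lambda>a. if a = 1 then \<psi> else 0)"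
    and dV: "\<And>x. V differentiable (at x)" and cV: "continuous_on UNIV (deriv V)"
  shows "-\<sigma>/2 * mj xs j (Q 0 j) \<psi> = -\<sigma>/2 * mj xs j (P 4 j) \<psi>"
proof -
  have cVp: "\<And>p A. continuous_on A (\<lambda>x. deriv V (poly p x))"
    by (intro continuous_on_compose2[OF cV] cpoly) auto
  show ?thesis using assms(1)
    unfolding dg_eq_def matdot_def sum6 Mmat_def Kmat_def
    apply (simp add: gradS0 dV gradS_lin gradS1' avg_av)
    apply (simp add: algebra_simps isimps cVp mj_def bj_def add_divide_distrib diff_divide_distrib
       del: mult_cancel_left mult_cancel_right)
    apply linarith?
    apply (auto simp: distrib_left[symmetric])?
    done
qed

lemma comp2:
  assumes "dg_eq \<sigma> \<nu> V N xs P Q j (\<lambda>a. if a = 2 then \<psi> else 0)"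
    and dV: "\<And>x. V differentiable (at x)" and cV: "continuous_on UNIV (deriv V)"
  shows "1/2 * mj xs j (Q 0 j) \<psi> - bj N xs (P 3) j \<psi> = 0"
proof -
  have cVp: "\<And>p A. continuous_on A (\<lambda>x. deriv V (poly p x))"
    by (intro continuous_on_compose2[OF cV] cpoly) auto
  show ?thesis using assms(1)
    unfolding dg_eq_def matdot_def sum6 Mmat_def Kmat_def
    apply (simp add: gradS0 dV gradS_lin gradS1' avg_av)
    apply (simp add: algebra_simps isimps cVp mj_def bj_def add_divide_distrib diff_divide_distrib
       del: mult_cancel_left mult_cancel_right)
    apply linarith?
    apply (auto simp: distrib_left[symmetric])?
    done
qed

lemma comp3:
  assumes "dg_eq \<sigma> \<nu> V N xs P Q j (\<lambda>a. if a = 3 then \<psi> else 0)"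
    and dV: "\<And>x. V differentiable (at x)" and cV: "continuous_on UNIV (deriv V)"
  shows "bj N xs (P 2) j \<psi> = mj xs j (P 0 j) \<psi>"
proof -
  have cVp: "\<And>p A. continuous_on A (\<lambda>x. deriv V (poly p x))"
    by (intro continuous_on_compose2[OF cV] cpoly) auto
  show ?thesis using assms(1)
    unfolding dg_eq_def matdot_def sum6 Mmat_def Kmat_def
    apply (simp add: gradS0 dV gradS_lin gradS1' avg_av)
    apply (simp add: algebra_simps isimps cVp mj_def bj_def add_divide_distrib diff_divide_distrib
       del: mult_cancel_left mult_cancel_right)
    apply linarith?
    apply (auto simp: distrib_left[symmetric])?
    done
qed

lemma comp4:
  assumes "dg_eq \<sigma> \<nu> V N xs P Q j (\<lambda>a. if a = 4 then \<psi> else 0)"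
    and dV: "\<And>x. V differentiable (at x)" and cV: "continuous_on UNIV (deriv V)"
  shows "-\<sigma>/2 * bj N xs (P 0) j \<psi> = -\<sigma>/2 * mj xs j (P 1 j) \<psi>"
proof -
  have cVp: "\<And>p A. continuous_on A (\<lambda>x. deriv V (poly p x))"
    by (intro continuous_on_compose2[OF cV] cpoly) auto
  show ?thesis using assms(1)
    unfolding dg_eq_def matdot_def sum6 Mmat_def Kmat_def
    apply (simp add: gradS0 dV gradS_lin gradS1' avg_av)
    apply (simp add: algebra_simps isimps cVp mj_def bj_def add_divide_distrib diff_divide_distrib
       del: mult_cancel_left mult_cancel_right)
    apply linarith?
    apply (auto simp: distrib_left[symmetric])?
    done
qed

lemma comp5:
  assumes "dg_eq \<sigma> \<nu> V N xs P Q j (\<lambda>a. if a = 5 then \<psi> else 0)"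
    and dV: "\<And>x. V differentiable (at x)" and cV: "continuous_on UNIV (deriv V)"
  shows "-\<nu> * bj N xs (P 0) j \<psi> = -\<nu> * mj xs j (P 5 j) \<psi>"
proof -
  have cVp: "\<And>p A. continuous_on A (\<lambda>x. deriv V (poly p x))"
    by (intro continuous_on_compose2[OF cV] cpoly) auto
  show ?thesis using assms(1)
    unfolding dg_eq_def matdot_def sum6 Mmat_def Kmat_def
    apply (simp add: gradS0 dV gradS_lin gradS1' avg_av)
    apply (simp add: algebra_simps isimps cVp mj_def bj_def add_divide_distrib diff_divide_distrib
       del: mult_cancel_left mult_cancel_right)
    apply linarith?
    apply (auto simp: distrib_left[symmetric])?
    done
qed




lemma ftc_poly:
  fixes F G :: "real poly" assumes "a \<le> b"
  shows "integral {a..b} (\<lambda>x. poly F x * poly (pderiv G) x) + integral {a..b} (\<lambda>x. poly G x * poly (pderiv F) x)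
    = poly F b * poly G b - poly F a * poly G a"
proof -
  have "((\<lambda>x. poly (pderiv (F*G)) x) has_integral (poly (F*G) b - poly (F*G) a)) {a..b}"
    apply (rule fundamental_theorem_of_calculus[OF assms])
    apply (subst has_real_derivative_iff_has_vector_derivative[symmetric])
    apply (rule has_field_derivative_at_within)
    apply (rule poly_DERIV)
    done
  then have "integral {a..b} (\<lambda>x. poly F x * poly (pderiv G) x + poly G x * poly (pderiv F) x)
     = poly F b * poly G b - poly F a * poly G a"
    by (simp add: pderiv_mult integral_unique)
  then show ?thesis by (simp add: isimps)
qed

lemma pr_suc: "j < N \<Longrightarrow> pr N (Suc j mod N) = j"
proof -
  assume j: "j < N"
  show ?thesis
  proof (cases "Suc j < N")
    case True
    then have "Suc j mod N = Suc j" by simp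
    moreover have "(Suc j + N - 1) mod N = j" using j by (simp add: mod_add_right_eq[symmetric])
    ultimately show ?thesis unfolding pr_def by simp
  next
    case False
    then have "Suc j = N" using j by simp
    then show ?thesis unfolding pr_def using j by simp
  qed
qed

lemma sum_shift: "N \<ge> 1 \<Longrightarrow> (\<Sum>j<N. h (Suc j mod N)) = (\<Sum>j<N. (h j :: real))"
proof -
  assume "N \<ge> 1"
  then obtain n where n: "N = Suc n" by (cases N) auto
  have "(\<Sum>j<Suc n. h (Suc j mod Suc n)) = (\<Sum>j<n. h (Suc j mod Suc n)) + h 0"
    by (simp add: sum.lessThan_Suc)
  also have "(\<Sum>j<n. h (Suc j mod Suc n)) = (\<Sum>j<n. h (Suc j))"
    by (rule sum.cong) auto
  also have "\<dots> + h 0 = (\<Sum>j<Suc n. h j)" by (simp only: sum.lessThan_Suc_shift add.commute)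
  finally show ?thesis using n by simp
qed

lemma bj_pair:
  assumes "j < N" "xs j \<le> xs (Suc j)"
  shows "bj N xs F j (G j) + bj N xs G j (F j) =
     (\<lambda>i. (poly (F i) (xs i) * poly (G (pr N i)) (xs (Suc (pr N i))) + poly (G i) (xs i) * poly (F (pr N i)) (xs (Suc (pr N i))))/2) (Suc j mod N)
   - (\<lambda>i. (poly (F i) (xs i) * poly (G (pr N i)) (xs (Suc (pr N i))) + poly (G i) (xs i) * poly (F (pr N i)) (xs (Suc (pr N i))))/2) j"
  using ftc_poly[OF assms(2), of "F j" "G j"]
  unfolding bj_def av_def pr_suc[OF assms(1)]
  by (simp add: algebra_simps add_divide_distrib diff_divide_distrib)

lemma skew:
  assumes "N \<ge> 1" "\<forall>j<N. xs j \<le> xs (Suc j)"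
  shows "(\<Sum>j<N. bj N xs F j (G j)) = - (\<Sum>j<N. bj N xs G j (F j))"
proof -
  define h where "h = (\<lambda>i. (poly (F i) (xs i) * poly (G (pr N i)) (xs (Suc (pr N i))) + poly (G i) (xs i) * poly (F (pr N i)) (xs (Suc (pr N i))))/2)"
  have "(\<Sum>j<N. bj N xs F j (G j)) + (\<Sum>j<N. bj N xs G j (F j)) = (\<Sum>j<N. h (Suc j mod N) - h j)"
    unfolding sum.distrib[symmetric] h_def using assms(2) by (intro sum.cong refl bj_pair) auto
  also have "\<dots> = 0" by (simp add: sum_subtractf sum_shift[OF assms(1)])
  finally show ?thesis by linarith
qed



lemma mj_sym: "mj xs j F G = mj xs j G F"
  unfolding mj_def by (simp add: mult.commute)

lemma single_deg: "degree \<psi> \<le> k \<Longrightarrow> \<forall>a<6. degree (if a = (c::nat) then \<psi> else 0) \<le> k"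
  by auto

lemma main_alg:
  fixes P Q :: "nat \<Rightarrow> nat \<Rightarrow> real poly"
  assumes N: "N \<ge> 1" and xs: "\<forall>j<N. xs j \<le> xs (Suc j)"
    and dV: "\<And>x. V differentiable (at x)" and cV: "continuous_on UNIV (deriv V)"
    and eqs: "\<forall>j<N. \<forall>\<phi>. (\<forall>a<6. degree (\<phi> a) \<le> k) \<longrightarrow> dg_eq \<sigma> \<nu> V N xs P Q j \<phi>"
    and degP: "\<forall>a<6. \<forall>j<N. degree (P a j) \<le> k"
    and degQ: "\<forall>a<6. \<forall>j<N. degree (Q a j) \<le> k"
    and d3: "\<forall>j<N. \<forall>\<psi>. degree \<psi> \<le> k \<longrightarrow> bj N xs (Q 2) j \<psi> = mj xs j (Q 0 j) \<psi>"
    and d4: "\<forall>j<N. \<forall>\<psi>. degree \<psi> \<le> k \<longrightarrow> \<sigma> * bj N xs (Q 0) j \<psi> = \<sigma> * mj xs j (Q 1 j) \<psi>"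
    and d5: "\<forall>j<N. \<forall>\<psi>. degree \<psi> \<le> k \<longrightarrow> \<nu> * bj N xs (Q 0) j \<psi> = \<nu> * mj xs j (Q 5 j) \<psi>"
  shows "(\<Sum>j<N. - integral {xs j..xs (Suc j)} (\<lambda>x. deriv V (poly (P 0 j) x) * poly (Q 0 j) x)
            + \<nu> * mj xs j (P 5 j) (Q 5 j)) = 0"
proof -
  define n where "n j = integral {xs j..xs (Suc j)} (\<lambda>x. deriv V (poly (P 0 j) x) * poly (Q 0 j) x)" for j
  define SM where "SM F G = (\<Sum>j<N. mj xs j (F j) (G j))" for F G
  define SB where "SB F G = (\<Sum>j<N. bj N xs F j (G j))" for F G
  have dg: "dg_eq \<sigma> \<nu> V N xs P Q j (\<lambda>a. if a = c then \<psi> else 0)" if "j < N" "degree \<psi> \<le> k" for j c \<psi>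
    using spec[OF mp[OF spec[OF eqs, of j] that(1)], of "\<lambda>a. if a = c then \<psi> else 0"] single_deg[OF that(2), of c]
    by (rule mp)
  have dPa: "degree (P a j) \<le> k" if "j < N" "a < 6" for j a
    using degP that by auto
  have dQa: "degree (Q a j) \<le> k" if "j < N" "a < 6" for j a
    using degQ that by auto
  have dP: "degree (P a j) \<le> k" "degree (Q a j) \<le> k" if "j < N" "a < 6" for a j
    using degP degQ that by auto
  have E0: "(\<Sum>j<N. n j) = SM (P 3) (Q 0) - \<sigma>/2 * SM (Q 1) (Q 0) + 1/2 * SM (Q 2) (Q 0)
     - \<sigma>/2 * SB (P 4) (Q 0) - \<nu> * SB (P 5) (Q 0)"
  proof -
    have "(\<Sum>j<N. n j) = (\<Sum>j<N. mj xs j (P 3 j) (Q 0 j) - \<sigma>/2 * mj xs j (Q 1 j) (Q 0 j)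
       + 1/2 * mj xs j (Q 2 j) (Q 0 j) - \<sigma>/2 * bj N xs (P 4) j (Q 0 j) - \<nu> * bj N xs (P 5) j (Q 0 j))"
      apply (rule sum.cong[OF refl])
      subgoal for j
      proof -
        assume "j \<in> {..<N}" then have j: "j < N" by simp
        from comp0[OF dg[where j=j and c=0 and \<psi>="Q 0 j", OF j dQa[where j=j and a=0, OF j]] dV cV]
        show ?thesis unfolding n_def by linarith
      qed
      done
    then show ?thesis unfolding SM_def SB_def
      by (simp add: sum.distrib sum_subtractf sum_distrib_left)
  qed
  have E1: "\<sigma> * SM (Q 0) (Q 1) = \<sigma> * SM (P 4) (Q 1)"
  proof -
    have "(\<Sum>j<N. \<sigma> * mj xs j (Q 0 j) (Q 1 j)) = (\<Sum>j<N. \<sigma> * mj xs j (P 4 j) (Q 1 j))"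
      apply (rule sum.cong[OF refl])
      subgoal for j
      proof -
        assume "j \<in> {..<N}" then have j: "j < N" by simp
        from comp1[OF dg[where j=j and c=1 and \<psi>="Q 1 j", OF j dQa[where j=j and a=1, OF j]] dV cV]
        show ?thesis by simp
      qed
      done
    then show ?thesis unfolding SM_def by (simp add: sum_distrib_left)
  qed
  have E2a: "SM (Q 0) (P 3) = 2 * SB (P 3) (P 3)"
  proof -
    have "(\<Sum>j<N. mj xs j (Q 0 j) (P 3 j)) = (\<Sum>j<N. 2 * bj N xs (P 3) j (P 3 j))"
      apply (rule sum.cong[OF refl])
      subgoal for j
      proof -
        assume "j \<in> {..<N}" then have j: "j < N" by simp
        from comp2[OF dg[where j=j and c=2 and \<psi>="P 3 j", OF j dPa[where j=j and a=3, OF j]] dV cV]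
        show ?thesis by simp
      qed
      done
    then show ?thesis unfolding SM_def SB_def by (simp add: sum_distrib_left)
  qed
  have E2b: "SM (Q 0) (Q 2) = 2 * SB (P 3) (Q 2)"
  proof -
    have "(\<Sum>j<N. mj xs j (Q 0 j) (Q 2 j)) = (\<Sum>j<N. 2 * bj N xs (P 3) j (Q 2 j))"
      apply (rule sum.cong[OF refl])
      subgoal for j
      proof -
        assume "j \<in> {..<N}" then have j: "j < N" by simp
        from comp2[OF dg[where j=j and c=2 and \<psi>="Q 2 j", OF j dQa[where j=j and a=2, OF j]] dV cV]
        show ?thesis by simp
      qed
      done
    then show ?thesis unfolding SM_def SB_def by (simp add: sum_distrib_left)
  qed
  have D3: "SB (Q 2) (P 3) = SM (Q 0) (P 3)"
    unfolding SM_def SB_def using d3 dP by (intro sum.cong refl) auto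
  have D4: "\<sigma> * SB (Q 0) (P 4) = \<sigma> * SM (Q 1) (P 4)"
    unfolding SM_def SB_def sum_distrib_left using d4 dP by (intro sum.cong refl) auto
  have D5: "\<nu> * SB (Q 0) (P 5) = \<nu> * SM (Q 5) (P 5)"
    unfolding SM_def SB_def sum_distrib_left using d5 dP by (intro sum.cong refl) auto
  have sk: "SB F G = - SB G F" for F G unfolding SB_def using skew[OF N xs] .
  have sym: "SM F G = SM G F" for F G unfolding SM_def by (rule sum.cong[OF refl]) (rule mj_sym)
  have S33: "SB (P 3) (P 3) = 0" using sk[of "P 3" "P 3"] by simp
  have "(\<Sum>j<N. - n j + \<nu> * mj xs j (P 5 j) (Q 5 j)) = - (\<Sum>j<N. n j) + \<nu> * SM (P 5) (Q 5)"
    unfolding SM_def by (simp add: sum.distrib sum_distrib_left sum_negf sum_subtractf)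
  also have "\<dots> = 0"
  proof -
    have A1: "\<sigma> * SB (P 4) (Q 0) = - (\<sigma> * SM (Q 1) (Q 0))"
    proof -
      have "\<sigma> * SB (P 4) (Q 0) = - (\<sigma> * SB (Q 0) (P 4))" using sk[of "P 4" "Q 0"] by simp
      also have "\<dots> = - (\<sigma> * SM (P 4) (Q 1))" using D4 sym[of "Q 1" "P 4"] by simp
      also have "\<dots> = - (\<sigma> * SM (Q 1) (Q 0))" using E1 sym[of "Q 1" "Q 0"] by auto
      finally show ?thesis .
    qed
    have A2: "\<nu> * SB (P 5) (Q 0) = - (\<nu> * SM (P 5) (Q 5))"
    proof -
      have "\<nu> * SB (P 5) (Q 0) = - (\<nu> * SB (Q 0) (P 5))" using sk[of "P 5" "Q 0"] by simp
      also have "\<dots> = - (\<nu> * SM (P 5) (Q 5))" using D5 sym[of "Q 5" "P 5"] by simp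
      finally show ?thesis .
    qed
    have A3: "SM (P 3) (Q 0) = 0" using sym[of "P 3" "Q 0"] E2a S33 by simp
    have A4: "SM (Q 2) (Q 0) = 0"
    proof -
      have "SM (Q 2) (Q 0) = 2 * SB (P 3) (Q 2)" using sym[of "Q 2" "Q 0"] E2b by simp
      also have "\<dots> = - 2 * SB (Q 2) (P 3)" using sk[of "P 3" "Q 2"] by simp
      also have "\<dots> = - 2 * SM (P 3) (Q 0)" using D3 sym[of "P 3" "Q 0"] by simp
      finally show ?thesis using A3 by simp
    qed
    have "\<sigma>/2 * SB (P 4) (Q 0) = - (\<sigma>/2 * SM (Q 1) (Q 0))" using A1 by simp
    then show ?thesis unfolding E0 using A2 A3 A4 by (simp add: algebra_simps)
  qed
  finally show ?thesis unfolding n_def .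
qed



lemma zero_deriv:
  fixes f :: "real \<Rightarrow> real"
  assumes "T0 < T1" "t \<in> {T0..T1}" "\<forall>s\<in>{T0..T1}. f s = 0"
    and "(f has_real_derivative D) (at t within {T0..T1})"
  shows "D = 0"
proof -
  have "((\<lambda>s. 0) has_real_derivative 0) (at t within {T0..T1})" by simp
  then have "(f has_real_derivative 0) (at t within {T0..T1})"
    by (rule has_field_derivative_transform_within[where d=1]) (use assms in auto)
  then show ?thesis using assms(4) vector_derivative_unique_within_closed_interval[OF assms(1), of t f D 0] assms(2)
    by (simp add: has_real_derivative_iff_has_vector_derivative)
qed

lemma poly_sum_bound:
  fixes p :: "real poly" assumes "degree p \<le> n" shows "poly p x = (\<Sum>i\<le>n. coeff p i * x ^ i)"
  unfolding poly_altdef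
  by (rule sum.mono_neutral_left) (use assms in \<open>auto simp: coeff_eq_0\<close>)

lemma cont_poly_family:
  fixes F :: "real \<Rightarrow> real poly"
  assumes "\<forall>s\<in>I. degree (F s) \<le> k" "\<forall>m. continuous_on I (\<lambda>s. coeff (F s) m)"
  shows "continuous_on (I \<times> X) (\<lambda>p. poly (F (fst p)) (snd p))"
proof -
  have "continuous_on (I \<times> X) (\<lambda>p. \<Sum>i\<le>k. coeff (F (fst p)) i * snd p ^ i)"
    by (intro continuous_intros continuous_on_compose2[OF assms(2)[rule_format]]) auto
  then show ?thesis
    by (rule continuous_on_cong[THEN iffD1, rotated 2]) (use assms(1) in \<open>auto simp: poly_sum_bound[of _ k]\<close>)
qed

lemma deriv_poly_family:
  fixes F :: "real \<Rightarrow> real poly"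
  assumes "t \<in> I" "\<forall>s\<in>I. degree (F s) \<le> k" "degree G \<le> k"
    and "\<forall>m. ((\<lambda>s. coeff (F s) m) has_real_derivative coeff G m) (at t within I)"
  shows "((\<lambda>s. poly (F s) x) has_real_derivative poly G x) (at t within I)"
proof -
  have "((\<lambda>s. \<Sum>i\<le>k. coeff (F s) i * x ^ i) has_real_derivative (\<Sum>i\<le>k. coeff G i * x ^ i)) (at t within I)"
    by (intro DERIV_sum DERIV_cmult_right assms(4)[rule_format])
  then have "((\<lambda>s. \<Sum>i\<le>k. coeff (F s) i * x ^ i) has_real_derivative poly G x) (at t within I)"
    using poly_sum_bound[OF assms(3)] by simp
  then show ?thesis
    by (rule has_field_derivative_transform_within[where d=1]) (use assms(1,2) in \<open>auto simp: poly_sum_bound[of _ k]\<close>)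
qed

lemma leib:
  fixes f f' :: "real \<Rightarrow> real \<Rightarrow> real"
  assumes "t \<in> {T0..T1}"
    and "\<And>s x. s \<in> {T0..T1} \<Longrightarrow> x \<in> {a..b} \<Longrightarrow> ((\<lambda>s. f s x) has_real_derivative f' s x) (at s within {T0..T1})"
    and "continuous_on ({T0..T1} \<times> {a..b}) (\<lambda>p. f' (fst p) (snd p))"
    and "\<And>s. s \<in> {T0..T1} \<Longrightarrow> continuous_on {a..b} (f s)"
  shows "((\<lambda>s. integral {a..b} (f s)) has_real_derivative integral {a..b} (f' t)) (at t within {T0..T1})"
proof -
  have "((\<lambda>s. integral (cbox a b) (f s)) has_real_derivative integral (cbox a b) (f' t)) (at t within {T0..T1})"
    apply (rule leibniz_rule_field_derivative)
    using assms by (auto simp: split_beta intro: integrable_continuous_interval)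
  then show ?thesis by simp
qed



theorem proposition4p6:
  fixes \<sigma> \<nu> T0 T1 :: real and V :: "real \<Rightarrow> real" and k N :: nat and xs :: "nat \<Rightarrow> real"
    and Z dZ :: "real \<Rightarrow> nat \<Rightarrow> nat \<Rightarrow> real poly"
  assumes "smooth_fun V"
    and "N \<ge> 1"
    and "\<forall>j<N. xs j < xs (Suc j)"
    and "\<forall>t\<in>{T0..T1}. \<forall>a<6. \<forall>j<N. degree (Z t a j) \<le> k"
    and "\<forall>t\<in>{T0..T1}. \<forall>a<6. \<forall>j<N. \<forall>m.
           ((\<lambda>s. coeff (Z s a j) m) has_real_derivative coeff (dZ t a j) m) (at t within {T0..T1})"
    and "\<forall>a<6. \<forall>j<N. \<forall>m. continuous_on {T0..T1} (\<lambda>s. coeff (dZ s a j) m)"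
    and "\<forall>t\<in>{T0..T1}. \<forall>j<N. \<forall>\<phi>. (\<forall>a<6. degree (\<phi> a) \<le> k) \<longrightarrow>
           dg_eq \<sigma> \<nu> V N xs (Z t) (dZ t) j \<phi>"
  shows "\<forall>t\<in>{T0..T1}. energy V \<nu> N xs (Z t) = energy V \<nu> N xs (Z T0)"
proof (cases "T0 < T1")
  case False
  show ?thesis
  proof
    fix t assume "t \<in> {T0..T1}"
    with False have "t = T0" by auto
    then show "energy V \<nu> N xs (Z t) = energy V \<nu> N xs (Z T0)" by simp
  qed
next
  case lt: True
  define I where "I = {T0..T1}"
  note N = assms(2)
  have xs: "\<forall>j<N. xs j \<le> xs (Suc j)" using assms(3) by auto
  have dV: "\<And>x. V differentiable (at x)"
    using assms(1) unfolding smooth_fun_def by (metis funpow_0)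
  have dV': "\<And>x. deriv V differentiable (at x)"
    using assms(1) unfolding smooth_fun_def by (metis funpow_0 funpow_Suc_right comp_apply)
  have cV: "continuous_on UNIV (deriv V)"
    by (rule differentiable_imp_continuous_on) (simp add: differentiable_on_def differentiable_at_withinI dV')
  have cV0: "continuous_on UNIV V"
    by (rule differentiable_imp_continuous_on) (simp add: differentiable_on_def differentiable_at_withinI dV)
  have Vd: "\<And>y. (V has_real_derivative deriv V y) (at y)"
    using dV DERIV_deriv_iff_real_differentiable by blast
  have degZ: "degree (Z t a j) \<le> k" if "t \<in> I" "a < 6" "j < N" for t a j
    using assms(4) that unfolding I_def by auto
  have dcoef: "((\<lambda>s. coeff (Z s a j) m) has_real_derivative coeff (dZ t a j) m) (at t within I)"
    if "t \<in> I" "a < 6" "j < N" for t a j m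
    using assms(5) that unfolding I_def by auto
  have degdZ: "degree (dZ t a j) \<le> k" if "t \<in> I" "a < 6" "j < N" for t a j
  proof (rule degree_le, intro allI impI)
    fix i assume "k < i"
    have "\<forall>s\<in>I. coeff (Z s a j) i = 0"
      using degZ that(2,3) \<open>k < i\<close> by (meson coeff_eq_0 le_less_trans)
    then show "coeff (dZ t a j) i = 0"
      using zero_deriv[OF lt, of t "\<lambda>s. coeff (Z s a j) i"] dcoef[OF that, of i] that(1)
      unfolding I_def by auto
  qed
  have PD: "((\<lambda>s. poly (Z s a j) x) has_real_derivative poly (dZ t a j) x) (at t within I)"
    if "t \<in> I" "a < 6" "j < N" for t a j x
    by (rule deriv_poly_family[where k=k]) (use that degZ degdZ dcoef in auto)
  have CZ: "continuous_on (I \<times> X) (\<lambda>p. poly (Z (fst p) a j) (snd p))" if "a < 6" "j < N" for a j X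
    apply (rule cont_poly_family[where k=k])
    using degZ that apply auto[1]
    using dcoef that by (auto intro!: DERIV_continuous_on)
  have CdZ: "continuous_on (I \<times> X) (\<lambda>p. poly (dZ (fst p) a j) (snd p))" if "a < 6" "j < N" for a j X
    apply (rule cont_poly_family[where k=k])
    using degdZ that apply auto[1]
    using assms(6) that unfolding I_def by auto
  have DM: "((\<lambda>s. mj xs j (Z s c j) \<psi>) has_real_derivative mj xs j (dZ t c j) \<psi>) (at t within I)"
    if "t \<in> I" "c < 6" "j < N" for t c j \<psi>
    unfolding mj_def I_def
    apply (rule leib)
    using that(1) I_def apply simp
    subgoal for s x using PD[of s c j x] that unfolding I_def by (auto intro: DERIV_cmult_right)
    subgoal using CdZ[OF that(2,3), of "{xs j..xs (Suc j)}"] unfolding I_def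
      by (auto intro!: continuous_on_mult continuous_on_poly continuous_on_snd)
    subgoal by (intro continuous_intros cpoly)
    done
  have prN: "pr N i < N" for i unfolding pr_def using N by simp
  have sN: "Suc j mod N < N" for j using N by simp
  have DB: "((\<lambda>s. bj N xs (Z s c) j \<psi>) has_real_derivative bj N xs (dZ t c) j \<psi>) (at t within I)"
    if "t \<in> I" "c < 6" "j < N" for t c j \<psi>
    unfolding bj_def av_def
    apply (intro DERIV_diff DERIV_add DERIV_minus DERIV_cmult_right DERIV_cdivide)
    using DM[OF that, of "pderiv \<psi>"] apply (simp add: mj_def)
    using PD[OF that(1,2)] prN sN that(3) by auto
  have dgs: "dg_eq \<sigma> \<nu> V N xs (Z s) (dZ s) j (\<lambda>a. if a = c then \<psi> else 0)"
    if "s \<in> I" "j < N" "degree \<psi> \<le> k" for s j c \<psi>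
    using assms(7) that unfolding I_def by auto
  have l6: "(0::nat) < 6" "(1::nat) < 6" "(2::nat) < 6" "(3::nat) < 6" "(4::nat) < 6" "(5::nat) < 6" by simp_all
  have d3: "bj N xs (dZ t 2) j \<psi> = mj xs j (dZ t 0 j) \<psi>"
    if "t \<in> I" "j < N" "degree \<psi> \<le> k" for t j \<psi>
  proof -
    have "bj N xs (dZ t 2) j \<psi> - mj xs j (dZ t 0 j) \<psi> = 0"
      apply (rule zero_deriv[OF lt, of t "\<lambda>s. bj N xs (Z s 2) j \<psi> - mj xs j (Z s 0 j) \<psi>"])
      using that(1) I_def apply simp
      using comp3[OF dgs[OF _ that(2,3)] dV cV] I_def apply auto[1]
      using DERIV_diff[OF DB[OF that(1) l6(3) that(2), of \<psi>] DM[OF that(1) l6(1) that(2), of \<psi>]] unfolding I_def .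
    then show ?thesis by simp
  qed
  have d4: "\<sigma> * bj N xs (dZ t 0) j \<psi> = \<sigma> * mj xs j (dZ t 1 j) \<psi>"
    if "t \<in> I" "j < N" "degree \<psi> \<le> k" for t j \<psi>
  proof -
    have "-\<sigma>/2 * bj N xs (dZ t 0) j \<psi> - -\<sigma>/2 * mj xs j (dZ t 1 j) \<psi> = 0"
      apply (rule zero_deriv[OF lt, of t "\<lambda>s. -\<sigma>/2 * bj N xs (Z s 0) j \<psi> - -\<sigma>/2 * mj xs j (Z s 1 j) \<psi>"])
      using that(1) I_def apply simp
      using comp4[OF dgs[OF _ that(2,3)] dV cV] I_def apply auto[1]
      using DERIV_diff[OF DERIV_cmult[OF DB[OF that(1) l6(1) that(2), of \<psi>], of "-\<sigma>/2"] DERIV_cmult[OF DM[OF that(1) l6(2) that(2), of \<psi>], of "-\<sigma>/2"]] unfolding I_def .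
    then show ?thesis by (auto simp: algebra_simps)
  qed
  have d5: "\<nu> * bj N xs (dZ t 0) j \<psi> = \<nu> * mj xs j (dZ t 5 j) \<psi>"
    if "t \<in> I" "j < N" "degree \<psi> \<le> k" for t j \<psi>
  proof -
    have "-\<nu> * bj N xs (dZ t 0) j \<psi> - -\<nu> * mj xs j (dZ t 5 j) \<psi> = 0"
      apply (rule zero_deriv[OF lt, of t "\<lambda>s. -\<nu> * bj N xs (Z s 0) j \<psi> - -\<nu> * mj xs j (Z s 5 j) \<psi>"])
      using that(1) I_def apply simp
      using comp5[OF dgs[OF _ that(2,3)] dV cV] I_def apply auto[1]
      using DERIV_diff[OF DERIV_cmult[OF DB[OF that(1) l6(1) that(2), of \<psi>], of "-\<nu>"] DERIV_cmult[OF DM[OF that(1) l6(6) that(2), of \<psi>], of "-\<nu>"]] unfolding I_def .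
    then show ?thesis by (auto simp: algebra_simps)
  qed
  have cVp: "\<And>p A. continuous_on A (\<lambda>x. deriv V (poly p x))"
    by (intro continuous_on_compose2[OF cV] cpoly) auto
  have ED: "((\<lambda>s. energy V \<nu> N xs (Z s)) has_real_derivative 0) (at t within I)" if tI: "t \<in> I" for t
  proof -
    define f' where "f' j s x = - (deriv V (poly (Z s 0 j) x) * poly (dZ s 0 j) x) + \<nu> * (poly (Z s 5 j) x * poly (dZ s 5 j) x)" for j s x
    have Dj: "((\<lambda>s. integral {xs j..xs (Suc j)} (\<lambda>x. - V (poly (Z s 0 j) x) + \<nu>/2 * (poly (Z s 5 j) x)^2))
       has_real_derivative integral {xs j..xs (Suc j)} (f' j t)) (at t within I)" if j: "j < N" for j
      unfolding I_def
      apply (rule leib)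
      using tI I_def apply simp
      subgoal for s x
        apply (rule DERIV_cong)
         apply (rule DERIV_add[OF DERIV_minus[OF DERIV_chain2[OF Vd PD[of s 0 j x, unfolded I_def]]]
               DERIV_cmult[OF DERIV_power[OF PD[of s 5 j x, unfolded I_def]]]])
        using j by (auto simp: f'_def)
      subgoal unfolding f'_def
        using CZ[OF l6(1) j, of "{xs j..xs (Suc j)}"] CZ[OF l6(6) j, of "{xs j..xs (Suc j)}"]
          CdZ[OF l6(1) j, of "{xs j..xs (Suc j)}"] CdZ[OF l6(6) j, of "{xs j..xs (Suc j)}"]
        unfolding I_def
        by (intro continuous_on_add continuous_on_minus continuous_on_mult continuous_on_const
             continuous_on_compose2[OF cV, of _ "\<lambda>p. poly (Z (fst p) 0 j) (snd p)"]) auto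
      subgoal
        by (intro continuous_on_add continuous_on_minus continuous_on_mult continuous_on_const
             continuous_on_power continuous_on_compose2[OF cV0 cpoly] cpoly) auto
      done
    have "((\<lambda>s. energy V \<nu> N xs (Z s)) has_real_derivative (\<Sum>j<N. integral {xs j..xs (Suc j)} (f' j t))) (at t within I)"
      unfolding energy_def by (rule DERIV_sum) (use Dj in auto)
    moreover have "(\<Sum>j<N. integral {xs j..xs (Suc j)} (f' j t)) = 0"
    proof -
      have each: "integral {xs j..xs (Suc j)} (f' j t) = - integral {xs j..xs (Suc j)} (\<lambda>x. deriv V (poly (Z t 0 j) x) * poly (dZ t 0 j) x)
            + \<nu> * mj xs j (Z t 5 j) (dZ t 5 j)" for j
        unfolding f'_def mj_def by (simp add: isimps cVp)
      have eqs: "\<forall>j<N. \<forall>\<phi>. (\<forall>a<6. degree (\<phi> a) \<le> k) \<longrightarrow> dg_eq \<sigma> \<nu> V N xs (Z t) (dZ t) j \<phi>"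
        using assms(7) tI unfolding I_def by blast
      show ?thesis unfolding each
        by (rule main_alg[OF N xs dV cV eqs]) (use degZ degdZ d3 d4 d5 tI in auto)
    qed
    ultimately show ?thesis by simp
  qed
  obtain c where "\<forall>s\<in>I. energy V \<nu> N xs (Z s) = c"
    using has_field_derivative_zero_constant[of I "\<lambda>s. energy V \<nu> N xs (Z s)"] ED unfolding I_def by auto
  then show ?thesis using lt unfolding I_def by auto
qed


end
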